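(* Let $\mathcal{G}=(\mathcal{V},\mathcal{E})$ be a finite graph and let $$R(\mathcal{G})=\{x\in[0,1]^{\mathcal{V}}:\ \mathfrak{K}_{\mathcal{G}'}(x|_{\mathcal{G}'})>0\text{ for every induced subgraph }\mathcal{G}'\subseteq\mathcal{G}\}.$$ For a unit vector $u$ in the nonnegative orthant of $\mathbb{R}^{\mathcal{V}}$, let $$\rho(u)=\inf\{r\in[0,\infty):\ \min_{\mathcal{G}'\subseteq\mathcal{G}}\mathfrak{K}_{\mathcal{G}'}(ru|_{\mathcal{G}'})=0\},$$ the minimum over all induced subgraphs $\mathcal{G}'$. Then: (1) $\rho(u)=\min\{r\in[0,\infty):\mathfrak{K}_{\mathcal{G}}(ru)=0\}$ (in particular this minimum exists); (2) for $x\in[0,1]^{\mathcal{V}}\setminus\{0\}$, $x\in R(\mathcal{G})$ if and only if $|x|<\rho(x/|x|)$; (3) the map $u\mapsto\rho(u)$ is continuous on the set of unit vectors in the nonnegative orthant; (4) the map $\{y\in[0,1]^{\mathcal{V}}:|y|<1\}\to R(\mathcal{G})$, $y\mapsto\rho(y/|y|)\,y$ (interpreted as $0$ when $y=0$) is a homeomorphism.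
   Context: Graphs are finite, simple, undirected. A clique is a set of pairwise adjacent vertices (the empty set is a clique). An induced subgraph $\mathcal{G}'$ has vertex set $\mathcal{V}'\subseteq\mathcal{V}$ and all edges of $\mathcal{G}$ between vertices of $\mathcal{V}'$; $x|_{\mathcal{G}'}=(x_v)_{v\in\mathcal{V}'}$. $\mathfrak{K}_{\mathcal{G}}(x)=\sum_{\mathcal{K}\subseteq\mathcal{V}\text{ clique}}(-1)^{|\mathcal{K}|}\prod_{v\in\mathcal{K}}x_v$, the empty clique contributing $1$. $|\cdot|$ is the Euclidean norm. *)

theory Defs
  imports "HOL-Analysis.Analysis"
begin

text \<open>A finite simple graph on the finite vertex type 'v is given by an edge relation
  E (assumed symmetric and irreflexive in the theorem).
  An induced subgraph is determined by its vertex set S.\<close>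

definition is_clique :: "('v \<Rightarrow> 'v \<Rightarrow> bool) \<Rightarrow> 'v set \<Rightarrow> bool" where
  "is_clique E K \<longleftrightarrow> (\<forall>u\<in>K. \<forall>w\<in>K. u \<noteq> w \<longrightarrow> E u w)"

text \<open>Clique polynomial of the induced subgraph on S, evaluated at x restricted to S.\<close>
definition clique_poly :: "('v::finite \<Rightarrow> 'v \<Rightarrow> bool) \<Rightarrow> 'v set \<Rightarrow> real^'v \<Rightarrow> real" where
  "clique_poly E S x = (\<Sum>K\<in>{K. K \<subseteq> S \<and> is_clique E K}. (-1) ^ card K * (\<Prod>v\<in>K. x $ v))"

definition unit_cube :: "(real^'v) set" where
  "unit_cube = {x. \<forall>v. 0 \<le> x $ v \<and> x $ v \<le> 1}"

definition Rset :: "('v::finite \<Rightarrow> 'v \<Rightarrow> bool) \<Rightarrow> (real^'v) set" where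
  "Rset E = {x \<in> unit_cube. \<forall>S. clique_poly E S x > 0}"

definition rho :: "('v::finite \<Rightarrow> 'v \<Rightarrow> bool) \<Rightarrow> real^'v \<Rightarrow> real" where
  "rho E u = Inf {r. 0 \<le> r \<and> Min ((\<lambda>S. clique_poly E S (r *\<^sub>R u)) ` UNIV) = 0}"

definition unit_orthant :: "(real^'v) set" where
  "unit_orthant = {u. norm u = 1 \<and> (\<forall>v. 0 \<le> u $ v)}"

end

theory Submission
  imports Defs
begin


definition upd :: "real^'v \<Rightarrow> 'v \<Rightarrow> real \<Rightarrow> real^'v" where
  "upd x v a = (\<chi> i. if i = v then a else x $ i)"

lemma upd_nth: "upd x v a $ i = (if i = v then a else x $ i)"
  by (simp add: upd_def)

lemma clique_poly_local:
  assumes "\<And>v. v \<in> S \<Longrightarrow> x $ v = y $ v"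
  shows "clique_poly E S x = clique_poly E S y"
  unfolding clique_poly_def
  by (rule sum.cong[OF refl], rule arg_cong[where f="\<lambda>t. _ * t"], rule prod.cong) (use assms in auto)

lemma clique_poly_empty: "clique_poly E {} x = 1"
proof -
  have "{K. K \<subseteq> {} \<and> is_clique E K} = {{}}" by (auto simp: is_clique_def)
  then show ?thesis unfolding clique_poly_def by simp
qed

lemma clique_poly_zero: "clique_poly E S 0 = 1"
proof -
  have "clique_poly E S 0 = (\<Sum>K\<in>{K. K \<subseteq> S \<and> is_clique E K}. if K = {} then 1 else 0)"
    unfolding clique_poly_def
    by (rule sum.cong[OF refl]) (auto simp: finite_subset)
  also have "\<dots> = 1"
    by (simp add: sum.delta is_clique_def)
  finally show ?thesis .
qed

locale gr =
  fixes E :: "'v::finite \<Rightarrow> 'v \<Rightarrow> bool"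
  assumes sym: "\<And>u w. E u w \<Longrightarrow> E w u"
    and irrefl: "\<And>u. \<not> E u u"
begin

abbreviation P where "P \<equiv> clique_poly E"
definition N :: "'v \<Rightarrow> 'v set" where "N v = {w. E v w}"

lemma v_notin_N: "v \<notin> N v" by (simp add: N_def irrefl)

lemma recursion:
  assumes "v \<in> S"
  shows "P S x = P (S - {v}) x - x $ v * P (S \<inter> N v) x"
proof -
  define C where "C T = {K. K \<subseteq> T \<and> is_clique E K}" for T
  define t where "t K = (-1::real) ^ card K * (\<Prod>v\<in>K. x $ v)" for K
  have P_eq: "P T x = sum t (C T)" for T unfolding clique_poly_def C_def t_def by simp
  have split: "C S = C (S - {v}) \<union> insert v ` C (S \<inter> N v)"
  proof (intro equalityI subsetI)
    fix K assume K: "K \<in> C S"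
    show "K \<in> C (S - {v}) \<union> insert v ` C (S \<inter> N v)"
    proof (cases "v \<in> K")
      case True
      have "K - {v} \<in> C (S \<inter> N v)" using K True
        by (auto simp: C_def is_clique_def N_def)
      moreover have "K = insert v (K - {v})" using True by auto
      ultimately show ?thesis by blast
    next
      case False then show ?thesis using K by (auto simp: C_def)
    qed
  next
    fix K assume "K \<in> C (S - {v}) \<union> insert v ` C (S \<inter> N v)"
    then show "K \<in> C S" using assms
      by (auto simp: C_def is_clique_def N_def intro: sym)
  qed
  have disj: "C (S - {v}) \<inter> insert v ` C (S \<inter> N v) = {}"
    by (auto simp: C_def)
  have inj: "inj_on (insert v) (C (S \<inter> N v))"
    unfolding inj_on_def C_def by (metis Int_iff insert_ident mem_Collect_eq subsetD v_notin_N)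
  have "sum t (C S) = sum t (C (S - {v})) + sum t (insert v ` C (S \<inter> N v))"
    unfolding split by (rule sum.union_disjoint) (auto simp: disj)
  also have "sum t (insert v ` C (S \<inter> N v)) = sum (t \<circ> insert v) (C (S \<inter> N v))"
    by (rule sum.reindex[OF inj])
  also have "\<dots> = sum (\<lambda>K. - (x $ v * t K)) (C (S \<inter> N v))"
  proof (rule sum.cong[OF refl])
    fix K assume "K \<in> C (S \<inter> N v)"
    then have "v \<notin> K" using v_notin_N by (auto simp: C_def)
    then show "(t \<circ> insert v) K = - (x $ v * t K)"
      by (simp add: t_def finite_subset)
  qed
  also have "\<dots> = - (x $ v * sum t (C (S \<inter> N v)))"
    by (simp add: sum_negf sum_distrib_left)
  finally show ?thesis unfolding P_eq by simp
qed

lemma upd_formula: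
  assumes "v \<in> S"
  shows "P S (upd x v a) = P S x - (a - x $ v) * P (S \<inter> N v) x"
proof -
  have 1: "P (S - {v}) (upd x v a) = P (S - {v}) x"
    by (rule clique_poly_local) (auto simp: upd_nth)
  have 2: "P (S \<inter> N v) (upd x v a) = P (S \<inter> N v) x"
    by (rule clique_poly_local) (auto simp: upd_nth v_notin_N)
  show ?thesis
    using recursion[OF assms, of "upd x v a"] recursion[OF assms, of x] 1 2
    by (simp add: upd_nth algebra_simps)
qed

lemma upd_notin:
  assumes "v \<notin> S"
  shows "P S (upd x v a) = P S x"
  by (rule clique_poly_local) (use assms in \<open>auto simp: upd_nth\<close>)

definition nonneg :: "real^'v \<Rightarrow> bool" where "nonneg y \<longleftrightarrow> (\<forall>S. P S y \<ge> 0)"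
definition pos :: "real^'v \<Rightarrow> bool" where "pos y \<longleftrightarrow> (\<forall>S. P S y > 0)"

lemma antitone:
  assumes y: "nonneg y" and le: "\<And>i. x $ i \<le> y $ i"
  shows "nonneg x \<and> (\<forall>S. P S y \<le> P S x)"
proof -
  define z where "z D = (\<chi> i. if i \<in> D then x $ i else y $ i)" for D
  have "nonneg (z D) \<and> (\<forall>S. P S y \<le> P S (z D))" if "finite D" for D
    using that
  proof (induction D rule: finite_induct)
    case empty
    have "z {} = y" by (simp add: z_def vec_eq_iff)
    then show ?case using y by simp
  next
    case (insert w D)
    have zeq: "z (insert w D) = upd (z D) w (x $ w)"
      by (simp add: z_def upd_def vec_eq_iff)
    have zw: "z D $ w = y $ w" using insert by (simp add: z_def)
    have ge: "P S (z D) \<le> P S (z (insert w D))" for S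
    proof (cases "w \<in> S")
      case True
      have "P (S \<inter> N w) (z D) \<ge> 0" using insert.IH by (simp add: nonneg_def)
      moreover have "x $ w - y $ w \<le> 0" using le[of w] by simp
      ultimately have "(x $ w - y $ w) * P (S \<inter> N w) (z D) \<le> 0"
        by (simp add: mult_nonpos_nonneg)
      then show ?thesis unfolding zeq upd_formula[OF True] zw by simp
    next
      case False then show ?thesis unfolding zeq upd_notin[OF False] by simp
    qed
    show ?case using insert.IH ge unfolding nonneg_def by (meson order_trans)
  qed
  moreover have "z UNIV = x" by (simp add: z_def vec_eq_iff)
  ultimately show ?thesis by (metis finite)
qed

lemma pos_nonneg: "pos y \<Longrightarrow> nonneg y"
  by (simp add: pos_def nonneg_def less_imp_le)

lemma pos_down:
  assumes "pos y" "\<And>i. x $ i \<le> y $ i" shows "pos x"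
  using antitone[OF pos_nonneg[OF assms(1)] assms(2)] assms(1)
  unfolding pos_def by (meson less_le_trans)

lemma univ_le:
  assumes "nonneg x" "\<And>i. 0 \<le> x $ i"
  shows "P UNIV x \<le> P S x"
proof -
  have "P (S \<union> D) x \<le> P S x" if "finite D" for D
    using that
  proof (induction D rule: finite_induct)
    case empty then show ?case by simp
  next
    case (insert w D)
    show ?case
    proof (cases "w \<in> S \<union> D")
      case True
      then have "S \<union> insert w D = S \<union> D" by auto
      then show ?thesis using insert by simp
    next
      case False
      have w: "w \<in> S \<union> insert w D" by simp
      have e: "S \<union> insert w D - {w} = S \<union> D" using False by auto
      have "x $ w * P ((S \<union> insert w D) \<inter> N w) x \<ge> 0"
        using assms by (simp add: nonneg_def)
      then show ?thesis using recursion[OF w, of x] e insert.IH by simp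
    qed
  qed
  from this[of UNIV] show ?thesis by simp
qed

end



context gr
begin

lemma cont_P: "continuous_on UNIV (\<lambda>x. P S x)"
  unfolding clique_poly_def by (intro continuous_intros)

lemma cont_P_comp: "continuous_on A f \<Longrightarrow> continuous_on A (\<lambda>x. P S (f x))"
  by (rule continuous_on_compose2[OF cont_P]) auto

lemma open_neg: "open {x. P S x < 0}"
  by (rule open_Collect_less) (auto intro: cont_P continuous_intros)

lemma open_pos: "open {x. pos x}"
proof -
  have "{x. pos x} = (\<Inter>S\<in>UNIV. {x. 0 < P S x})" by (auto simp: pos_def)
  moreover have "open {x. 0 < P S x}" for S
    by (rule open_Collect_less) (auto intro: cont_P continuous_intros)
  ultimately show ?thesis by (auto intro: open_INT)
qed

lemma P_single: "P {c} x = 1 - x $ c"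
  using recursion[of c "{c}" x] v_notin_N[of c] by (simp add: clique_poly_empty)

lemma pos_zero: "pos 0" by (simp add: pos_def clique_poly_zero)

context
  fixes u :: "real^'v"
  assumes u: "u \<in> unit_orthant"
begin

lemma u_nonneg: "0 \<le> u $ i" using u by (simp add: unit_orthant_def)

lemma ex_c: "\<exists>c. 0 < u $ c"
proof -
  have "u \<noteq> 0" using u by (auto simp: unit_orthant_def)
  then obtain c where "u $ c \<noteq> 0" by (auto simp: vec_eq_iff)
  then show ?thesis using u_nonneg[of c] by (intro exI[of _ c]) simp
qed

definition B where "B = {r. 0 \<le> r \<and> \<not> pos (r *\<^sub>R u)}"
definition rs where "rs = Inf B"

lemma B_ne: "B \<noteq> {}"
proof -
  obtain c where c: "0 < u $ c" using ex_c by blast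
  have "P {c} ((1 / u $ c) *\<^sub>R u) = 0" using c by (simp add: P_single)
  then have "\<not> pos ((1 / u $ c) *\<^sub>R u)" unfolding pos_def by (metis less_irrefl)
  then have "1 / u $ c \<in> B" using c unfolding B_def by simp
  then show ?thesis by blast
qed

lemma B_bdd: "bdd_below B" unfolding B_def by (auto intro: bdd_belowI[of _ 0])

lemma B_closed: "closed B"
proof -
  have "B = {r. 0 \<le> r} \<inter> (\<Union>S\<in>UNIV. {r. P S (r *\<^sub>R u) \<le> 0})"
    by (auto simp: B_def pos_def not_less)
  moreover have "closed {r. P S (r *\<^sub>R u) \<le> 0}" for S
    by (rule closed_Collect_le) (auto intro!: cont_P_comp continuous_intros)
  then have "closed (\<Union>S\<in>UNIV. {r. P S (r *\<^sub>R u) \<le> 0})" by (intro closed_UN) auto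
  moreover have "closed {r::real. 0 \<le> r}"
    using closed_atLeast[of "0::real"] by (simp add: atLeast_def)
  ultimately show ?thesis using closed_Int by auto
qed

lemma rs_in: "rs \<in> B"
  unfolding rs_def by (rule closed_contains_Inf[OF B_ne B_bdd B_closed])

lemma lt_pos: "0 \<le> r \<Longrightarrow> r < rs \<Longrightarrow> pos (r *\<^sub>R u)"
proof (rule ccontr)
  assume "0 \<le> r" "r < rs" "\<not> pos (r *\<^sub>R u)"
  then have "r \<in> B" by (simp add: B_def)
  then have "rs \<le> r" unfolding rs_def by (rule cInf_lower[OF _ B_bdd])
  then show False using \<open>r < rs\<close> by simp
qed

lemma ge_not_pos: "rs \<le> r \<Longrightarrow> \<not> pos (r *\<^sub>R u)"
proof
  assume "rs \<le> r" "pos (r *\<^sub>R u)"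
  moreover have "(rs *\<^sub>R u) $ i \<le> (r *\<^sub>R u) $ i" for i
    using \<open>rs \<le> r\<close> u_nonneg[of i] by (simp add: mult_right_mono)
  ultimately have "pos (rs *\<^sub>R u)" by (metis pos_down)
  then show False using rs_in by (simp add: B_def)
qed

lemma rs_pos: "0 < rs"
proof -
  have "0 \<le> rs" using rs_in by (simp add: B_def)
  moreover have "rs \<noteq> 0" using rs_in pos_zero by (auto simp: B_def)
  ultimately show ?thesis by simp
qed

lemma rs_nonneg: "nonneg (rs *\<^sub>R u)"
  unfolding nonneg_def
proof
  fix S
  show "0 \<le> P S (rs *\<^sub>R u)"
  proof (rule ccontr)
    assume "\<not> 0 \<le> P S (rs *\<^sub>R u)"
    then have "rs \<in> {r. P S (r *\<^sub>R u) < 0}" by simp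
    moreover have "open {r. P S (r *\<^sub>R u) < 0}"
      by (rule open_Collect_less) (auto intro!: cont_P_comp continuous_intros)
    ultimately obtain e where e: "e > 0" "ball rs e \<subseteq> {r. P S (r *\<^sub>R u) < 0}"
      by (meson openE)
    define r where "r = rs - min e rs / 2"
    have "r \<in> ball rs e" using e rs_pos by (auto simp: r_def dist_real_def)
    then have "P S (r *\<^sub>R u) < 0" using e by auto
    moreover have "pos (r *\<^sub>R u)" using rs_pos e by (intro lt_pos) (auto simp: r_def)
    ultimately show False by (simp add: pos_def) (meson not_less_iff_gr_or_eq)
  qed
qed

lemma ex_S0: "\<exists>S0. P S0 (rs *\<^sub>R u) = 0"
proof -
  have "\<not> pos (rs *\<^sub>R u)" using rs_in by (simp add: B_def)
  then obtain S0 where "\<not> P S0 (rs *\<^sub>R u) > 0" unfolding pos_def by blast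
  moreover have "P S0 (rs *\<^sub>R u) \<ge> 0" using rs_nonneg by (simp add: nonneg_def)
  ultimately show ?thesis by (intro exI[of _ S0]) simp
qed

lemma rho_eq: "rho E u = rs"
  unfolding rho_def
proof (rule cInf_eq_minimum)
  obtain S0 where S0: "P S0 (rs *\<^sub>R u) = 0" using ex_S0 by blast
  let ?M = "Min (range (\<lambda>S. P S (rs *\<^sub>R u)))"
  have "?M \<in> range (\<lambda>S. P S (rs *\<^sub>R u))" by (rule Min_in) auto
  then have "0 \<le> ?M" using rs_nonneg by (auto simp: nonneg_def)
  moreover have "?M \<le> P S0 (rs *\<^sub>R u)" by (rule Min_le) auto
  ultimately have "?M = 0" using S0 by linarith
  then show "rs \<in> {r. 0 \<le> r \<and> Min (range (\<lambda>S. P S (r *\<^sub>R u))) = 0}"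
    using rs_pos by simp
next
  fix r assume "r \<in> {r. 0 \<le> r \<and> Min (range (\<lambda>S. P S (r *\<^sub>R u))) = 0}"
  then have r: "0 \<le> r" "Min (range (\<lambda>S. P S (r *\<^sub>R u))) = 0" by auto
  have "Min (range (\<lambda>S. P S (r *\<^sub>R u))) \<in> range (\<lambda>S. P S (r *\<^sub>R u))" by (rule Min_in) auto
  then obtain S where "P S (r *\<^sub>R u) = 0" using r by auto
  then have "\<not> pos (r *\<^sub>R u)" unfolding pos_def by (metis less_irrefl)
  then show "rs \<le> r" using lt_pos[OF r(1)] by (meson not_le)
qed

lemma beyond:
  assumes "rs < r"
  shows "\<exists>T. P T (r *\<^sub>R u) < 0"
proof -
  obtain S0 where S0: "P S0 (rs *\<^sub>R u) = 0" using ex_S0 by blast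
  obtain S where S: "P S (rs *\<^sub>R u) = 0" and Smin: "\<And>T. P T (rs *\<^sub>R u) = 0 \<Longrightarrow> card S \<le> card T"
    using ex_has_least_nat[of "\<lambda>S. P S (rs *\<^sub>R u) = 0" S0 card] S0 by blast
  have "\<exists>v\<in>S. 0 < u $ v"
  proof (rule ccontr)
    assume a: "\<not> (\<exists>v\<in>S. 0 < u $ v)"
    have "u $ v = 0" if "v \<in> S" for v
    proof -
      have "\<not> 0 < u $ v" using a that by blast
      then show ?thesis using u_nonneg[of v] by simp
    qed
    then have "P S (rs *\<^sub>R u) = P S 0" by (intro clique_poly_local) simp
    then show False using S by (simp add: clique_poly_zero)
  qed
  then obtain v where v: "v \<in> S" "0 < u $ v" by blast
  have "S \<inter> N v \<subset> S" using v v_notin_N by auto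
  then have "card (S \<inter> N v) < card S" by (simp add: psubset_card_mono)
  then have "P (S \<inter> N v) (rs *\<^sub>R u) \<noteq> 0"
  proof -
    assume c: "card (S \<inter> N v) < card S"
    show ?thesis
    proof
      assume "P (S \<inter> N v) (rs *\<^sub>R u) = 0"
      then have "card S \<le> card (S \<inter> N v)" by (rule Smin)
      then show False using c by simp
    qed
  qed
  moreover have "P (S \<inter> N v) (rs *\<^sub>R u) \<ge> 0" using rs_nonneg by (simp add: nonneg_def)
  ultimately have Ppos: "P (S \<inter> N v) (rs *\<^sub>R u) > 0" by simp
  define x' where "x' = upd (rs *\<^sub>R u) v (r * u $ v)"
  have "P S x' = - ((r - rs) * u $ v) * P (S \<inter> N v) (rs *\<^sub>R u)"
    unfolding x'_def upd_formula[OF v(1)] S by (simp add: algebra_simps)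
  moreover have "(r - rs) * u $ v > 0" using assms v by simp
  ultimately have neg: "P S x' < 0" using Ppos by (simp add: mult_pos_pos)
  show ?thesis
  proof (rule ccontr)
    assume "\<not> ?thesis"
    then have "nonneg (r *\<^sub>R u)" by (auto simp: nonneg_def not_less)
    moreover have "x' $ i \<le> (r *\<^sub>R u) $ i" for i
      using assms u_nonneg[of i] by (auto simp: x'_def upd_nth mult_right_mono)
    ultimately have "nonneg x'" using antitone by blast
    then have "P S x' \<ge> 0" by (simp add: nonneg_def)
    then show False using neg by simp
  qed
qed

lemma univ_zero: "P UNIV (rs *\<^sub>R u) = 0"
proof -
  obtain S0 where S0: "P S0 (rs *\<^sub>R u) = 0" using ex_S0 by blast
  have "P UNIV (rs *\<^sub>R u) \<le> P S0 (rs *\<^sub>R u)"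
    by (rule univ_le[OF rs_nonneg]) (use rs_pos u_nonneg in simp)
  moreover have "0 \<le> P UNIV (rs *\<^sub>R u)" using rs_nonneg by (simp add: nonneg_def)
  ultimately show ?thesis using S0 by simp
qed

lemma rs_comp_le: "rs * u $ v \<le> 1"
proof (rule ccontr)
  assume a: "\<not> ?thesis"
  have uv: "0 < u $ v"
  proof (rule ccontr)
    assume "\<not> 0 < u $ v"
    then have "u $ v = 0" using u_nonneg[of v] by simp
    then show False using a by simp
  qed
  have "1 / u $ v < rs" using a uv by (simp add: field_simps)
  then have "pos ((1 / u $ v) *\<^sub>R u)" using uv by (intro lt_pos) auto
  then have "P {v} ((1 / u $ v) *\<^sub>R u) > 0" by (simp add: pos_def)
  then show False using uv by (simp add: P_single)
qed

lemma pos_iff: "0 \<le> r \<Longrightarrow> pos (r *\<^sub>R u) \<longleftrightarrow> r < rho E u"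
  unfolding rho_eq using lt_pos ge_not_pos by (meson not_le)

end

end



context gr
begin

lemma rho_pos: "u \<in> unit_orthant \<Longrightarrow> 0 < rho E u"
  using rho_eq rs_pos by simp

lemma rho_beyond: "u \<in> unit_orthant \<Longrightarrow> rho E u < r \<Longrightarrow> \<exists>T. P T (r *\<^sub>R u) < 0"
  using rho_eq beyond by simp

lemma rho_univ: "u \<in> unit_orthant \<Longrightarrow> P UNIV (rho E u *\<^sub>R u) = 0"
  using rho_eq univ_zero by simp

lemma rho_comp: "u \<in> unit_orthant \<Longrightarrow> rho E u * u $ v \<le> 1"
  using rho_eq rs_comp_le by simp

lemma dist_scale:
  fixes a b :: "'a::real_normed_vector"
  assumes "0 < (r::real)" shows "dist (r *\<^sub>R a) (r *\<^sub>R b) = r * dist a b"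
proof -
  have "dist (r *\<^sub>R a) (r *\<^sub>R b) = norm (r *\<^sub>R (a - b))"
    by (simp add: dist_norm algebra_simps)
  then show ?thesis using assms by (simp add: dist_norm)
qed

lemma rho_cont_pt:
  assumes u: "u \<in> unit_orthant" and e: "0 < e"
  shows "\<exists>d>0. \<forall>w\<in>unit_orthant. dist w u < d \<longrightarrow> dist (rho E w) (rho E u) < e"
proof -
  define r1 where "r1 = rho E u + e / 2"
  have r1pos: "0 < r1" using rho_pos[OF u] e by (simp add: r1_def)
  obtain T where T: "P T (r1 *\<^sub>R u) < 0" using rho_beyond[OF u, of r1] e by (auto simp: r1_def)
  obtain d1 where d1: "d1 > 0" "ball (r1 *\<^sub>R u) d1 \<subseteq> {x. P T x < 0}"
    using open_neg[of T] T by (meson openE mem_Collect_eq)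
  have up: "rho E w < rho E u + e" if w: "w \<in> unit_orthant" "dist w u < d1 / r1" for w
  proof -
    have "dist (r1 *\<^sub>R u) (r1 *\<^sub>R w) < d1"
      using w(2) r1pos by (simp add: dist_scale dist_commute field_simps)
    then have "P T (r1 *\<^sub>R w) < 0" using d1 by auto
    then have "\<not> pos (r1 *\<^sub>R w)" unfolding pos_def by (meson not_less_iff_gr_or_eq)
    then have "\<not> r1 < rho E w" using pos_iff[OF w(1), of r1] r1pos by simp
    then show ?thesis using e by (simp add: r1_def)
  qed
  show ?thesis
  proof (cases "rho E u - e / 2 \<le> 0")
    case True
    show ?thesis
    proof (intro exI[of _ "d1 / r1"] conjI ballI impI)
      show "0 < d1 / r1" using d1 r1pos by simp
      fix w assume w: "w \<in> unit_orthant" "dist w u < d1 / r1"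
      have "rho E w > rho E u - e" using rho_pos[OF w(1)] True e by simp
      then show "dist (rho E w) (rho E u) < e" using up[OF w] by (simp add: dist_real_def abs_less_iff)
    qed
  next
    case False
    define r2 where "r2 = rho E u - e / 2"
    have r2pos: "0 < r2" using False by (simp add: r2_def)
    have "pos (r2 *\<^sub>R u)" using pos_iff[OF u, of r2] r2pos e by (simp add: r2_def)
    then obtain d2 where d2: "d2 > 0" "ball (r2 *\<^sub>R u) d2 \<subseteq> {x. pos x}"
      using open_pos by (meson openE mem_Collect_eq)
    show ?thesis
    proof (intro exI[of _ "min (d1 / r1) (d2 / r2)"] conjI ballI impI)
      show "0 < min (d1 / r1) (d2 / r2)" using d1 r1pos d2 r2pos by simp
      fix w assume w: "w \<in> unit_orthant" "dist w u < min (d1 / r1) (d2 / r2)"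
      have "dist (r2 *\<^sub>R u) (r2 *\<^sub>R w) < d2"
        using w(2) r2pos by (simp add: dist_scale dist_commute field_simps)
      then have "pos (r2 *\<^sub>R w)" using d2 by auto
      then have "r2 < rho E w" using pos_iff[OF w(1), of r2] r2pos by simp
      moreover have "rho E w < rho E u + e" using up w by simp
      ultimately show "dist (rho E w) (rho E u) < e" using e
        by (simp add: dist_real_def abs_less_iff r2_def)
    qed
  qed
qed

lemma rho_cont: "continuous_on unit_orthant (rho E)"
  unfolding continuous_on_iff using rho_cont_pt by blast

lemma orthant_compact: "compact (unit_orthant :: (real^'v) set)"
proof -
  have "bounded (unit_orthant :: (real^'v) set)"
    unfolding bounded_iff unit_orthant_def by (intro exI[of _ 1]) simp
  moreover have "closed (unit_orthant :: (real^'v) set)"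
  proof -
    have eq: "(unit_orthant :: (real^'v) set) = {u. norm u = 1} \<inter> (\<Inter>i\<in>UNIV. {u. 0 \<le> u $ i})"
      by (auto simp: unit_orthant_def)
    have c1: "closed {u::real^'v. norm u = 1}"
      by (rule closed_Collect_eq) (auto intro: continuous_intros)
    have c2: "closed {u::real^'v. 0 \<le> u $ i}" for i
      by (rule closed_Collect_le) (auto intro: continuous_intros)
    show ?thesis unfolding eq using c1 c2 by (intro closed_Int closed_INT) auto
  qed
  ultimately show ?thesis by (simp add: compact_eq_bounded_closed)
qed

lemma rho_upper: "\<exists>M. \<forall>u\<in>unit_orthant. rho E u \<le> M"
proof -
  have "compact (rho E ` unit_orthant)"
    by (rule compact_continuous_image[OF rho_cont orthant_compact])
  then have "bounded (rho E ` unit_orthant)" by (rule compact_imp_bounded)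
  then obtain M where "\<forall>x\<in>rho E ` unit_orthant. norm x \<le> M" unfolding bounded_iff by blast
  then show ?thesis by (intro exI[of _ M]) auto
qed

lemma rho_lower: "\<exists>m>0. \<forall>u\<in>unit_orthant. m \<le> rho E u"
proof (cases "(unit_orthant :: (real^'v) set) = {}")
  case True then show ?thesis by (intro exI[of _ 1]) simp
next
  case False
  then obtain u0 where "u0 \<in> unit_orthant" "\<forall>y\<in>unit_orthant. rho E u0 \<le> rho E y"
    using continuous_attains_inf[OF orthant_compact False rho_cont] by blast
  then show ?thesis using rho_pos by blast
qed

end



context gr
begin

lemma normalize_orth:
  assumes "x \<in> unit_cube" "x \<noteq> 0" shows "x /\<^sub>R norm x \<in> unit_orthant"
  using assms by (simp add: unit_orthant_def unit_cube_def)

lemma decomp: "x \<noteq> 0 \<Longrightarrow> norm x *\<^sub>R (x /\<^sub>R norm x) = (x::real^'v)"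
  by simp

lemma Nm_scale: "0 < c \<Longrightarrow> (c *\<^sub>R y) /\<^sub>R norm (c *\<^sub>R y) = y /\<^sub>R norm (y::real^'v)"
  by (simp add: abs_of_pos)

lemma Rset_iff: "x \<in> Rset E \<longleftrightarrow> x \<in> unit_cube \<and> pos x"
  by (simp add: Rset_def pos_def)

lemma part2:
  assumes "x \<in> unit_cube - {0}"
  shows "x \<in> Rset E \<longleftrightarrow> norm x < rho E (x /\<^sub>R norm x)"
proof -
  have x: "x \<in> unit_cube" "x \<noteq> 0" using assms by auto
  have "pos x \<longleftrightarrow> pos (norm x *\<^sub>R (x /\<^sub>R norm x))" using decomp[OF x(2)] by simp
  also have "\<dots> \<longleftrightarrow> norm x < rho E (x /\<^sub>R norm x)"
    by (rule pos_iff[OF normalize_orth[OF x]]) simp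
  finally show ?thesis using x by (simp add: Rset_iff)
qed

lemma part1:
  assumes u: "u \<in> unit_orthant"
  shows "0 \<le> rho E u \<and> clique_poly E UNIV (rho E u *\<^sub>R u) = 0 \<and>
         (\<forall>r. 0 \<le> r \<and> clique_poly E UNIV (r *\<^sub>R u) = 0 \<longrightarrow> rho E u \<le> r)"
proof (intro conjI allI impI)
  show "0 \<le> rho E u" using rho_pos[OF u] by simp
  show "P UNIV (rho E u *\<^sub>R u) = 0" by (rule rho_univ[OF u])
  fix r assume r: "0 \<le> r \<and> P UNIV (r *\<^sub>R u) = 0"
  then have "\<not> pos (r *\<^sub>R u)" unfolding pos_def by (metis less_irrefl)
  then show "rho E u \<le> r" using pos_iff[OF u, of r] r by simp
qed

definition fm :: "real^'v \<Rightarrow> real^'v" where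
  "fm y = (if y = 0 then 0 else rho E (y /\<^sub>R norm y) *\<^sub>R y)"
definition gm :: "real^'v \<Rightarrow> real^'v" where
  "gm x = (if x = 0 then 0 else x /\<^sub>R rho E (x /\<^sub>R norm x))"

abbreviation "Y \<equiv> {y \<in> (unit_cube :: (real^'v) set). norm y < 1}"

lemma fm_in:
  assumes y: "y \<in> Y" shows "fm y \<in> Rset E"
proof (cases "y = 0")
  case True then show ?thesis
    by (simp add: fm_def Rset_iff pos_zero unit_cube_def)
next
  case False
  define u where "u = y /\<^sub>R norm y"
  have u: "u \<in> unit_orthant" using normalize_orth[of y] y False by (simp add: u_def)
  have yu: "y = norm y *\<^sub>R u" using False by (simp add: u_def)
  have fy: "fm y = (rho E u * norm y) *\<^sub>R u"
    using False by (simp add: fm_def u_def[symmetric]) (metis yu scaleR_scaleR)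
  have rp: "0 < rho E u" by (rule rho_pos[OF u])
  have ny: "norm y < 1" using y by simp
  have "pos (fm y)" unfolding fy
    using pos_iff[OF u, of "rho E u * norm y"] rp ny
    by (simp add: mult_less_cancel_left1)
  moreover have "fm y \<in> unit_cube"
    unfolding unit_cube_def
  proof (intro CollectI allI conjI)
    fix v
    have uv: "0 \<le> u $ v" using u by (simp add: unit_orthant_def)
    have "fm y $ v = (rho E u * u $ v) * norm y" unfolding fy by simp
    moreover have "rho E u * u $ v \<le> 1" by (rule rho_comp[OF u])
    moreover have "0 \<le> rho E u * u $ v" using rp uv by simp
    ultimately show "0 \<le> fm y $ v" "fm y $ v \<le> 1" using ny
      by (simp_all add: mult_le_one)
  qed
  ultimately show ?thesis by (simp add: Rset_iff)
qed

lemma gm_in: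
  assumes x: "x \<in> Rset E" shows "gm x \<in> Y"
proof (cases "x = 0")
  case True then show ?thesis by (simp add: gm_def unit_cube_def)
next
  case False
  define u where "u = x /\<^sub>R norm x"
  have xc: "x \<in> unit_cube" using x by (simp add: Rset_iff)
  have u: "u \<in> unit_orthant" using normalize_orth[OF xc False] by (simp add: u_def)
  have rp: "0 < rho E u" by (rule rho_pos[OF u])
  have lt: "norm x < rho E u" using part2[of x] x xc False by (simp add: u_def)
  have gx: "gm x = x /\<^sub>R rho E u" using False by (simp add: gm_def u_def)
  have ng: "norm (gm x) < 1" unfolding gx using lt rp by (simp add: field_simps)
  have "gm x \<in> unit_cube" unfolding unit_cube_def
  proof (intro CollectI allI conjI)
    fix v
    show "0 \<le> gm x $ v" using xc rp unfolding gx by (simp add: unit_cube_def)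
    show "gm x $ v \<le> 1" using component_le_norm_cart[of "gm x" v] ng by simp
  qed
  then show ?thesis using ng by simp
qed

lemma gm_fm: assumes y: "y \<in> Y" shows "gm (fm y) = y"
proof (cases "y = 0")
  case True then show ?thesis by (simp add: fm_def gm_def)
next
  case False
  have yc: "y \<in> unit_cube" using y by simp
  have rp: "0 < rho E (y /\<^sub>R norm y)" by (rule rho_pos[OF normalize_orth[OF yc False]])
  have fy: "fm y = rho E (y /\<^sub>R norm y) *\<^sub>R y" using False by (simp add: fm_def)
  have nz: "fm y \<noteq> 0" using fy rp False by simp
  have nm: "fm y /\<^sub>R norm (fm y) = y /\<^sub>R norm y" unfolding fy by (rule Nm_scale[OF rp])
  have "gm (fm y) = fm y /\<^sub>R rho E (y /\<^sub>R norm y)"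
    by (simp only: gm_def if_not_P[OF nz] nm)
  also have "\<dots> = y" using rp by (simp add: fy)
  finally show ?thesis .
qed

lemma fm_gm: assumes x: "x \<in> Rset E" shows "fm (gm x) = x"
proof (cases "x = 0")
  case True then show ?thesis by (simp add: fm_def gm_def)
next
  case False
  have xc: "x \<in> unit_cube" using x by (simp add: Rset_iff)
  have rp: "0 < rho E (x /\<^sub>R norm x)" by (rule rho_pos[OF normalize_orth[OF xc False]])
  have gx: "gm x = inverse (rho E (x /\<^sub>R norm x)) *\<^sub>R x" using False by (simp add: gm_def)
  have nz: "gm x \<noteq> 0" using gx rp False by simp
  have nm: "gm x /\<^sub>R norm (gm x) = x /\<^sub>R norm x" unfolding gx by (rule Nm_scale) (use rp in simp)
  have "fm (gm x) = rho E (x /\<^sub>R norm x) *\<^sub>R gm x"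
    by (simp only: fm_def if_not_P[OF nz] nm)
  also have "\<dots> = x" using rp by (simp add: gx)
  finally show ?thesis .
qed

lemma cont_away:
  assumes "continuous_on (A - {0}) h" "\<And>y. y \<in> A - {0} \<Longrightarrow> k y = h y"
    and "y \<in> A" "y \<noteq> (0::real^'v)"
  shows "continuous (at y within A) k"
proof -
  have "continuous_on (A - {0}) k" using assms(1,2) continuous_on_cong by blast
  then have "continuous (at y within A - {0}) k"
    using assms(3,4) continuous_on_eq_continuous_within by blast
  moreover have "at y within A = at y within (A - {0})"
    by (rule at_within_nhd[of y "- {0}"]) (use assms(4) in auto)
  ultimately show ?thesis by simp
qed

lemma Nm_cont: "continuous_on (A - {0}) (\<lambda>y::real^'v. y /\<^sub>R norm y)"
  by (intro continuous_intros) auto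

lemma fm_cont: "continuous_on Y fm"
  unfolding continuous_on_eq_continuous_within
proof
  fix y assume y: "y \<in> Y"
  show "continuous (at y within Y) fm"
  proof (cases "y = 0")
    case False
    have "continuous_on (Y - {0}) (\<lambda>y. rho E (y /\<^sub>R norm y) *\<^sub>R y)"
    proof (intro continuous_on_scaleR continuous_on_id)
      show "continuous_on (Y - {0}) (\<lambda>y. rho E (y /\<^sub>R norm y))"
        by (rule continuous_on_compose2[OF rho_cont Nm_cont]) (auto intro: normalize_orth)
    qed
    then show ?thesis
      by (rule cont_away) (use y False in \<open>auto simp: fm_def\<close>)
  next
    case True
    obtain M where M: "\<forall>u\<in>unit_orthant. rho E u \<le> M" using rho_upper by blast
    show ?thesis unfolding continuous_within_eps_delta True
    proof (intro allI impI)
      fix e :: real assume e: "0 < e"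
      show "\<exists>d>0. \<forall>x'\<in>Y. dist x' 0 < d \<longrightarrow> dist (fm x') (fm 0) < e"
      proof (intro exI[of _ "e / (\<bar>M\<bar> + 1)"] conjI ballI impI)
        show "0 < e / (\<bar>M\<bar> + 1)" using e by simp
        fix x' assume x': "x' \<in> Y" "dist x' 0 < e / (\<bar>M\<bar> + 1)"
        show "dist (fm x') (fm 0) < e"
        proof (cases "x' = 0")
          case True then show ?thesis using e by (simp add: fm_def)
        next
          case False
          have o: "x' /\<^sub>R norm x' \<in> unit_orthant" using normalize_orth[of x'] x' False by simp
          have r0: "0 \<le> rho E (x' /\<^sub>R norm x')" using rho_pos[OF o] by simp
          have r1: "rho E (x' /\<^sub>R norm x') \<le> \<bar>M\<bar> + 1" using M o by fastforce
          have "norm x' * (\<bar>M\<bar> + 1) < e" using x'(2) by (simp add: field_simps)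
          moreover have "norm (fm x') = rho E (x' /\<^sub>R norm x') * norm x'"
            using False r0 by (simp add: fm_def)
          moreover have "rho E (x' /\<^sub>R norm x') * norm x' \<le> (\<bar>M\<bar> + 1) * norm x'"
            using r1 by (simp add: mult_right_mono)
          ultimately show ?thesis by (simp add: fm_def[of 0] mult.commute)
        qed
      qed
    qed
  qed
qed

lemma gm_cont: "continuous_on (Rset E) gm"
  unfolding continuous_on_eq_continuous_within
proof
  fix y assume y: "y \<in> Rset E"
  show "continuous (at y within Rset E) gm"
  proof (cases "y = 0")
    case False
    have "continuous_on (Rset E - {0}) (\<lambda>y. inverse (rho E (y /\<^sub>R norm y)) *\<^sub>R y)"
    proof (intro continuous_on_scaleR continuous_on_id continuous_on_inverse)
      show "continuous_on (Rset E - {0}) (\<lambda>y. rho E (y /\<^sub>R norm y))"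
        by (rule continuous_on_compose2[OF rho_cont Nm_cont]) (auto intro: normalize_orth simp: Rset_iff)
      show "\<forall>x\<in>Rset E - {0}. rho E (x /\<^sub>R norm x) \<noteq> 0"
        using rho_pos normalize_orth by (fastforce simp: Rset_iff)
    qed
    then show ?thesis
      by (rule cont_away) (use y False in \<open>auto simp: gm_def divide_inverse_commute\<close>)
  next
    case True
    obtain m where m: "m > 0" "\<forall>u\<in>unit_orthant. m \<le> rho E u" using rho_lower by blast
    show ?thesis unfolding continuous_within_eps_delta True
    proof (intro allI impI)
      fix e :: real assume e: "0 < e"
      show "\<exists>d>0. \<forall>x'\<in>Rset E. dist x' 0 < d \<longrightarrow> dist (gm x') (gm 0) < e"
      proof (intro exI[of _ "e * m"] conjI ballI impI)
        show "0 < e * m" using e m by simp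
        fix x' assume x': "x' \<in> Rset E" "dist x' 0 < e * m"
        show "dist (gm x') (gm 0) < e"
        proof (cases "x' = 0")
          case True then show ?thesis using e by (simp add: gm_def)
        next
          case False
          have o: "x' /\<^sub>R norm x' \<in> unit_orthant" using normalize_orth[of x'] x' False by (simp add: Rset_iff)
          have r1: "m \<le> rho E (x' /\<^sub>R norm x')" using m o by blast
          have "norm (gm x') = norm x' / rho E (x' /\<^sub>R norm x')"
            using False m r1 by (simp add: gm_def divide_inverse mult.commute)
          also have "\<dots> \<le> norm x' / m" using r1 m by (simp add: frac_le)
          also have "\<dots> < e" using x'(2) m by (simp add: field_simps)
          finally show ?thesis by (simp add: gm_def[of 0])
        qed
      qed
    qed
  qed
qed

lemma part4:
  "\<exists>g. homeomorphism Y (Rset E) (\<lambda>y. if y = 0 then 0 else rho E (y /\<^sub>R norm y) *\<^sub>R y) g"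
proof -
  have eq: "(\<lambda>y. if y = 0 then 0 else rho E (y /\<^sub>R norm y) *\<^sub>R y) = fm"
    by (rule ext) (simp add: fm_def)
  have "homeomorphism Y (Rset E) fm gm"
  proof (rule homeomorphismI[OF fm_cont gm_cont])
    show "fm ` Y \<subseteq> Rset E" using fm_in by blast
    show "gm ` Rset E \<subseteq> Y" using gm_in by blast
  qed (auto intro: gm_fm fm_gm)
  then show ?thesis unfolding eq by blast
qed

end


theorem lemma4p3:
  fixes E :: "'v::finite \<Rightarrow> 'v \<Rightarrow> bool"
  assumes sym: "\<And>u w. E u w \<Longrightarrow> E w u"
    and irrefl: "\<And>u. \<not> E u u"
  shows "(\<forall>u\<in>unit_orthant.
            0 \<le> rho E u \<and> clique_poly E UNIV (rho E u *\<^sub>R u) = 0 \<and>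
            (\<forall>r. 0 \<le> r \<and> clique_poly E UNIV (r *\<^sub>R u) = 0 \<longrightarrow> rho E u \<le> r))
       \<and> (\<forall>x\<in>unit_cube - {0}. x \<in> Rset E \<longleftrightarrow> norm x < rho E (x /\<^sub>R norm x))
       \<and> continuous_on unit_orthant (rho E)
       \<and> (\<exists>g. homeomorphism {y \<in> unit_cube. norm y < 1} (Rset E)
               (\<lambda>y. if y = 0 then 0 else rho E (y /\<^sub>R norm y) *\<^sub>R y) g)"
proof -
  interpret G: gr E
    by (rule gr.intro) (use sym irrefl in auto)
  show ?thesis using G.part1 G.part2 G.rho_cont G.part4 by blast
qed

end
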